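(* Let $P=(p_1,\dots,p_n)$ be points in $\mathbb{R}^d$, $\mathcal{F}$ a constraint for $k$-CMedian, and $\mathcal{C}=\{c_1,\dots,c_k\}\subset\mathbb{R}^d$ with $\omega=\frac1n\sum_{i=1}^n\min_{c\in\mathcal{C}}\|p_i-c\|$. For each $i$ let $\tilde p_i$ be a point of $\mathcal{C}$ nearest to $p_i$, $\tilde P=(\tilde p_1,\dots,\tilde p_n)$, and $\tilde\mu_{opt}$ the optimal $k$-CMedian value of $\tilde P$. Let $\mu_{opt}([\mathcal{C}]^k)=\min_{(S_j)\in\mathcal{F}}\min_{(q_1,\dots,q_k)\in\mathcal{C}^k}\frac1n\sum_j\sum_{i\in S_j}\|p_i-q_j\|$. Then $\mu_{opt}([\mathcal{C}]^k)\le\omega+2\tilde\mu_{opt}$.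
   Context: A constraint for $k$-CMedian is a nonempty family $\mathcal{F}$ of ordered partitions $(S_1,\dots,S_k)$ of $\{1,\dots,n\}$ into $k$ parts. For a sequence $X=(x_1,\dots,x_n)$ its optimal $k$-CMedian value is $\min_{(S_j)\in\mathcal{F}}\min_{c'_1,\dots,c'_k\in\mathbb{R}^d}\frac1n\sum_j\sum_{i\in S_j}\|x_i-c'_j\|$. *)

theory Defs
  imports "HOL-Analysis.Analysis"
begin

definition ordered_partition :: "nat \<Rightarrow> nat \<Rightarrow> (nat \<Rightarrow> nat set) \<Rightarrow> bool" where
  "ordered_partition n k S \<longleftrightarrow>
     (\<Union>j\<in>{1..k}. S j) = {1..n} \<and>
     (\<forall>j\<in>{1..k}. \<forall>j'\<in>{1..k}. j \<noteq> j' \<longrightarrow> S j \<inter> S j' = {}) \<and>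
     (\<forall>j. j \<notin> {1..k} \<longrightarrow> S j = {})"

definition cmedian_constraint :: "nat \<Rightarrow> nat \<Rightarrow> (nat \<Rightarrow> nat set) set \<Rightarrow> bool" where
  "cmedian_constraint n k F \<longleftrightarrow> F \<noteq> {} \<and> (\<forall>S\<in>F. ordered_partition n k S)"

definition cm_cost :: "nat \<Rightarrow> nat \<Rightarrow> (nat \<Rightarrow> 'a::real_normed_vector) \<Rightarrow> (nat \<Rightarrow> nat set)
                        \<Rightarrow> (nat \<Rightarrow> 'a) \<Rightarrow> real" where
  "cm_cost n k X S c = (1 / real n) * (\<Sum>j\<in>{1..k}. \<Sum>i\<in>S j. norm (X i - c j))"

definition cmedian_opt :: "nat \<Rightarrow> nat \<Rightarrow> (nat \<Rightarrow> nat set) set \<Rightarrow> (nat \<Rightarrow> 'a::real_normed_vector) \<Rightarrow> real" where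
  "cmedian_opt n k F X = (INF S\<in>F. INF c\<in>(UNIV :: (nat \<Rightarrow> 'a) set). cm_cost n k X S c)"

definition cmedian_opt_restr :: "nat \<Rightarrow> nat \<Rightarrow> (nat \<Rightarrow> nat set) set \<Rightarrow> 'a set
                                  \<Rightarrow> (nat \<Rightarrow> 'a::real_normed_vector) \<Rightarrow> real" where
  "cmedian_opt_restr n k F C X =
     (INF S\<in>F. INF q\<in>{q. \<forall>j\<in>{1..k}. q j \<in> C}. cm_cost n k X S q)"

end

theory Submission
  imports Defs
begin

theorem lemma13:
  fixes P :: "nat \<Rightarrow> 'a::euclidean_space"
    and c :: "nat \<Rightarrow> 'a"
    and Ptil :: "nat \<Rightarrow> 'a"
    and F :: "(nat \<Rightarrow> nat set) set"
    and n k :: nat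
    and \<omega> :: real
  assumes "n \<ge> 1" and "k \<ge> 1"
    and "cmedian_constraint n k F"
    and "\<omega> = (1 / real n) * (\<Sum>i\<in>{1..n}. Min ((\<lambda>x. norm (P i - x)) ` (c ` {1..k})))"
    and "\<forall>i\<in>{1..n}. Ptil i \<in> c ` {1..k} \<and>
           (\<forall>x\<in>c ` {1..k}. norm (P i - Ptil i) \<le> norm (P i - x))"
  shows "cmedian_opt_restr n k F (c ` {1..k}) P \<le> \<omega> + 2 * cmedian_opt n k F Ptil"
proof -
  define C where "C = c ` {1..k}"
  have Cfin: "finite C" and Cne: "C \<noteq> {}" using assms(2) by (auto simp: C_def)
  have Fne: "F \<noteq> {}" and Fpart: "\<And>S. S \<in> F \<Longrightarrow> ordered_partition n k S"
    using assms(3) by (auto simp: cmedian_constraint_def)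
  have npos: "real n > 0" using assms(1) by auto
  have cost_nn: "cm_cost n k X S q \<ge> 0" for X :: "nat \<Rightarrow> 'a" and S q
    unfolding cm_cost_def using npos by (simp add: sum_nonneg)
  have Qne: "{q. \<forall>j\<in>{1..k}. q j \<in> C} \<noteq> {}"
  proof -
    obtain x where "x \<in> C" using Cne by blast
    then have "(\<lambda>_. x) \<in> {q. \<forall>j\<in>{1..k}. q j \<in> C}" by simp
    then show ?thesis by (metis empty_iff)
  qed
  have omega_eq: "\<omega> = (1 / real n) * (\<Sum>i\<in>{1..n}. norm (P i - Ptil i))"
  proof -
    have "Min ((\<lambda>x. norm (P i - x)) ` C) = norm (P i - Ptil i)" if "i \<in> {1..n}" for i
      using assms(5) that Cfin by (intro Min_eqI) (auto simp: C_def)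
    then show ?thesis using assms(4) unfolding C_def by simp
  qed
  have key: "cmedian_opt_restr n k F C P \<le> \<omega> + 2 * cm_cost n k Ptil S c'"
    if SF: "S \<in> F" for S c'
  proof -
    have near: "\<exists>x\<in>C. \<forall>y\<in>C. norm (c' j - x) \<le> norm (c' j - y)" for j
    proof -
      let ?m = "Min ((\<lambda>x. norm (c' j - x)) ` C)"
      have "?m \<in> (\<lambda>x. norm (c' j - x)) ` C" using Cfin Cne by (intro Min_in) auto
      then obtain x where "x \<in> C" "norm (c' j - x) = ?m" by auto
      moreover have "?m \<le> norm (c' j - y)" if "y \<in> C" for y using Cfin that by auto
      ultimately show ?thesis by metis
    qed
    define q where "q j = (SOME x. x \<in> C \<and> (\<forall>y\<in>C. norm (c' j - x) \<le> norm (c' j - y)))" for j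
    have q: "q j \<in> C \<and> (\<forall>y\<in>C. norm (c' j - q j) \<le> norm (c' j - y))" for j
      unfolding q_def by (rule someI_ex[OF near[of j, unfolded Bex_def]])
    have part: "ordered_partition n k S" using Fpart SF .
    have Ssub: "S j \<subseteq> {1..n}" if "j \<in> {1..k}" for j
    proof -
      have U: "(\<Union>j\<in>{1..k}. S j) = {1..n}" using part unfolding ordered_partition_def by (rule conjunct1)
      show ?thesis using that by (subst U[symmetric]) (rule UN_upper)
    qed
    have pt: "norm (P i - q j) \<le> norm (P i - Ptil i) + 2 * norm (Ptil i - c' j)"
      if "i \<in> {1..n}" for i j
    proof -
      have t: "Ptil i \<in> C" using assms(5) that by (auto simp: C_def)
      have "norm (c' j - q j) \<le> norm (c' j - Ptil i)" using q t by blast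
      also have "\<dots> = norm (Ptil i - c' j)" by (rule norm_minus_commute)
      finally have a: "norm (c' j - q j) \<le> norm (Ptil i - c' j)" .
      have "norm (P i - q j) \<le> norm (P i - Ptil i) + norm (Ptil i - c' j) + norm (c' j - q j)"
      proof -
        have e: "P i - q j = (P i - Ptil i) + (Ptil i - c' j) + (c' j - q j)" by simp
        have "norm ((P i - Ptil i) + (Ptil i - c' j) + (c' j - q j))
           \<le> norm ((P i - Ptil i) + (Ptil i - c' j)) + norm (c' j - q j)" by (rule norm_triangle_ineq)
        moreover have "norm ((P i - Ptil i) + (Ptil i - c' j)) \<le> norm (P i - Ptil i) + norm (Ptil i - c' j)"
          by (rule norm_triangle_ineq)
        ultimately show ?thesis unfolding e by linarith
      qed
      with a show ?thesis by linarith
    qed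
    have "(\<Sum>j\<in>{1..k}. \<Sum>i\<in>S j. norm (P i - q j))
        \<le> (\<Sum>j\<in>{1..k}. \<Sum>i\<in>S j. norm (P i - Ptil i) + 2 * norm (Ptil i - c' j))"
      using Ssub pt by (intro sum_mono) blast
    also have "\<dots> = (\<Sum>j\<in>{1..k}. \<Sum>i\<in>S j. norm (P i - Ptil i))
        + 2 * (\<Sum>j\<in>{1..k}. \<Sum>i\<in>S j. norm (Ptil i - c' j))"
      by (simp add: sum.distrib sum_distrib_left)
    also have "(\<Sum>j\<in>{1..k}. \<Sum>i\<in>S j. norm (P i - Ptil i)) = (\<Sum>i\<in>{1..n}. norm (P i - Ptil i))"
    proof -
      have "(\<Sum>i\<in>(\<Union>j\<in>{1..k}. S j). norm (P i - Ptil i))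
          = (\<Sum>j\<in>{1..k}. \<Sum>i\<in>S j. norm (P i - Ptil i))"
        using part Ssub unfolding ordered_partition_def
        by (intro sum.UNION_disjoint) (auto intro: finite_subset)
      moreover have "(\<Union>j\<in>{1..k}. S j) = {1..n}" using part unfolding ordered_partition_def by (rule conjunct1)
      ultimately show ?thesis by simp
    qed
    finally have "cm_cost n k P S q \<le> \<omega> + 2 * cm_cost n k Ptil S c'"
      unfolding cm_cost_def omega_eq using npos by (simp add: field_simps divide_right_mono)
    moreover have "cmedian_opt_restr n k F C P \<le> (INF q\<in>{q. \<forall>j\<in>{1..k}. q j \<in> C}. cm_cost n k P S q)"
      unfolding cmedian_opt_restr_def
    proof (rule cINF_lower[OF _ SF])
      show "bdd_below ((\<lambda>S. INF q\<in>{q. \<forall>j\<in>{1..k}. q j \<in> C}. cm_cost n k P S q) ` F)"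
        using Qne cost_nn by (auto intro!: bdd_belowI[of _ 0] cINF_greatest)
    qed
    moreover have "(INF q\<in>{q. \<forall>j\<in>{1..k}. q j \<in> C}. cm_cost n k P S q) \<le> cm_cost n k P S q"
      using q cost_nn by (intro cINF_lower) (auto intro!: bdd_belowI[of _ 0])
    ultimately show ?thesis by linarith
  qed
  have "(cmedian_opt_restr n k F C P - \<omega>) / 2 \<le> cmedian_opt n k F Ptil"
    unfolding cmedian_opt_def
    using key Fne by (intro cINF_greatest) (auto simp: field_simps)
  then show ?thesis unfolding C_def by simp
qed

end
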